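(* Let $\boldsymbol{\Psi}_{\mathrm{id}}=\mathrm{diag}(\psi_{\mathrm{id},1},\dots,\psi_{\mathrm{id},N})$ with all $\psi_{\mathrm{id},i}>0$, $\boldsymbol{\Psi}_{\mathrm{f}}=\mathrm{diag}(\psi_{\mathrm{f},1},\dots,\psi_{\mathrm{f},K})$ with all $\psi_{\mathrm{f},k}>0$, and $\mathbf{W}=[\mathbf{w}_1\ \cdots\ \mathbf{w}_K]\in\mathbb{R}^{N\times K}$ with linearly independent columns. For scalars $\alpha,\beta\in(0,1]$ let $\mathbf{G}=\left(\alpha\boldsymbol{\Psi}_{\mathrm{id}}+\beta\mathbf{W}\boldsymbol{\Psi}_{\mathrm{f}}\mathbf{W}^\top\right)^{-1}$ and, for $\mathbf{v}\in\mathbb{R}^N$, $\bar{\mathcal{C}}(\mathbf{v})=\tfrac12\mathbf{v}^\top\mathbf{G}\mathbf{v}$ (which depends on $\alpha,\beta$). Then: (i) $\displaystyle\lim_{\alpha\to1,\beta\to0}\bar{\mathcal{C}}(\mathbf{v})=\tfrac12\mathbf{v}^\top\boldsymbol{\Psi}_{\mathrm{id}}^{-1}\mathbf{v}=\tfrac12\sum_{i=1}^N\frac{v_i^2}{\psi_{\mathrm{id},i}}$; (ii) $\displaystyle\lim_{\alpha\to0,\beta\to1}\bar{\mathcal{C}}(\mathbf{v})=\infty$ if $\mathbf{v}\notin\mathrm{span}(\mathbf{w}_1,\dots,\mathbf{w}_K)$, and $\displaystyle\lim_{\alpha\to0,\beta\to1}\bar{\mathcal{C}}(\mathbf{v})=\tfrac12\mathbf{u}^\top\boldsymbol{\Psi}_{\mathrm{f}}^{-1}\mathbf{u}$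 if $\mathbf{v}=\mathbf{W}\mathbf{u}$ with $\mathbf{u}\in\mathbb{R}^K$.
   Context: $\bar{\mathcal{C}}(\mathbf{v})$ is the one-period expected implementation shortfall of executing $\mathbf{v}$ shares under linear price impact with coefficient matrix $\mathbf{G}$. *)

theory Defs
  imports "HOL-Analysis.Analysis"
begin

definition diag_mat :: "real ^ 'n \<Rightarrow> real ^ 'n ^ 'n" where
  "diag_mat d = (\<chi> i j. if i = j then d $ i else 0)"

definition lin_indep_columns :: "real ^ 'k ^ 'n \<Rightarrow> bool" where
  "lin_indep_columns W \<longleftrightarrow> (\<forall>u. W *v u = 0 \<longrightarrow> u = 0)"

definition impactG :: "real ^ 'n \<Rightarrow> real ^ 'k \<Rightarrow> real ^ 'k ^ 'n \<Rightarrow> real \<Rightarrow> real \<Rightarrow> real ^ 'n ^ 'n" where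
  "impactG psi_id psi_f W \<alpha> \<beta> =
     matrix_inv (\<alpha> *\<^sub>R diag_mat psi_id + \<beta> *\<^sub>R (W ** diag_mat psi_f ** transpose W))"

definition Cbar :: "real ^ 'n \<Rightarrow> real ^ 'k \<Rightarrow> real ^ 'k ^ 'n \<Rightarrow> real \<Rightarrow> real \<Rightarrow> real ^ 'n \<Rightarrow> real" where
  "Cbar psi_id psi_f W \<alpha> \<beta> v = 1/2 * (v \<bullet> (impactG psi_id psi_f W \<alpha> \<beta> *v v))"

end

theory Submission
  imports Defs
begin



lemma if_mult0: "(if P then (a::real) else 0) * b = (if P then a*b else 0)"
  by simp

lemma diag_mv: "diag_mat d *v x = (\<chi> i. d$i * x$i)"
  by (simp add: diag_mat_def matrix_vector_mult_def vec_eq_iff if_mult0)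

lemma diag_qf: "x \<bullet> (diag_mat d *v x) = (\<Sum>i\<in>UNIV. d$i * (x$i)\<^sup>2)"
  by (simp add: diag_mv inner_vec_def power2_eq_square mult.commute mult.left_commute)

lemma diag_mul: "diag_mat d ** diag_mat e = diag_mat (\<chi> i. d$i * e$i)"
  by (simp add: diag_mat_def matrix_matrix_mult_def vec_eq_iff if_mult0)

lemma diag_one: "diag_mat (\<chi> i. 1) = mat 1"
  by (simp add: diag_mat_def mat_def vec_eq_iff)

lemma transpose_diag: "transpose (diag_mat d) = diag_mat d"
  by (simp add: diag_mat_def transpose_def vec_eq_iff)

lemma transpose_plus: "transpose (M + N) = transpose M + transpose N"
  by (simp add: transpose_def vec_eq_iff)

lemma inv_unique:
  fixes A :: "real^'n^'n"
  assumes "A ** B = mat 1" "B ** A = mat 1"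
  shows "matrix_inv A = B"
  unfolding matrix_inv_def
proof (rule some_equality)
  fix X assume h: "A ** X = mat 1 \<and> X ** A = mat 1"
  have "X = X ** (A ** B)" using assms by simp
  also have "\<dots> = (X ** A) ** B" by (simp add: matrix_mul_assoc)
  also have "\<dots> = B" using h by simp
  finally show "X = B" .
qed (use assms in auto)

lemma matrix_inv_diag:
  assumes "\<forall>i. d$i \<noteq> (0::real)"
  shows "matrix_inv (diag_mat d) = diag_mat (\<chi> i. 1 / d$i)"
  by (rule inv_unique) (simp_all add: diag_mul assms diag_one[symmetric])

lemma tW: "x \<bullet> (W *v z) = (transpose W *v x) \<bullet> (z::real^'a)"
  by (metis dot_lmul_matrix transpose_transpose vector_transpose_matrix)

lemma wfw_qf:
  fixes W :: "real^'k^'n"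
  shows "x \<bullet> ((W ** F ** transpose W) *v y) = (transpose W *v x) \<bullet> (F *v (transpose W *v y))"
  by (simp add: matrix_vector_mul_assoc[symmetric] tW)

lemma smul_mv: "(c *\<^sub>R M) *v x = c *\<^sub>R (M *v (x::real^'a))"
  by (simp add: scaleR_matrix_vector_assoc)

lemma var:
  fixes A :: "real^'n^'n"
  assumes sym: "\<forall>x y. x \<bullet> (A *v y) = y \<bullet> (A *v x)" and psd: "\<forall>z. 0 \<le> z \<bullet> (A *v z)"
    and Ay: "A *v y = v"
  shows "2*(v \<bullet> x) - x \<bullet> (A *v x) \<le> v \<bullet> y" and "v \<bullet> y = 2*(v \<bullet> y) - y \<bullet> (A *v y)"
proof -
  have "0 \<le> (y - x) \<bullet> (A *v (y - x))" using psd by blast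
  also have "\<dots> = y \<bullet> (A *v y) - y \<bullet> (A *v x) - x \<bullet> (A *v y) + x \<bullet> (A *v x)"
    by (simp add: matrix_vector_mult_diff_distrib inner_diff_left inner_diff_right)
  also have "\<dots> = v \<bullet> y - 2 * (v \<bullet> x) + x \<bullet> (A *v x)"
  proof -
    have e1: "y \<bullet> (A *v x) = x \<bullet> v" using sym Ay by metis
    have e2: "x \<bullet> (A *v y) = x \<bullet> v" using Ay by simp
    have e3: "y \<bullet> (A *v y) = v \<bullet> y" using Ay by (simp add: inner_commute)
    show ?thesis using e1 e2 e3 by (simp add: inner_commute)
  qed
  finally show "2*(v \<bullet> x) - x \<bullet> (A *v x) \<le> v \<bullet> y" by simp
  show "v \<bullet> y = 2*(v \<bullet> y) - y \<bullet> (A *v y)" using Ay by (simp add: inner_commute)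
qed

lemma term_bound: "0 < (c::real) \<Longrightarrow> 2*p*t - c*t\<^sup>2 \<le> p\<^sup>2/c"
proof -
  assume c: "0 < c"
  have "0 \<le> (p - c*t)\<^sup>2 / c" using c by simp
  also have "\<dots> = p\<^sup>2/c - 2*p*t + c*t\<^sup>2" using c by (simp add: field_simps power2_eq_square)
  finally show ?thesis by simp
qed



definition AM :: "real ^ 'n \<Rightarrow> real ^ 'k \<Rightarrow> real ^ 'k ^ 'n \<Rightarrow> real \<Rightarrow> real \<Rightarrow> real ^ 'n ^ 'n" where
  "AM psi_id psi_f W a b = a *\<^sub>R diag_mat psi_id + b *\<^sub>R (W ** diag_mat psi_f ** transpose W)"

lemma AM_qf: "x \<bullet> (AM psi_id psi_f W a b *v x) =
   a * (\<Sum>i\<in>UNIV. psi_id$i * (x$i)\<^sup>2) + b * (\<Sum>k\<in>UNIV. psi_f$k * ((transpose W *v x)$k)\<^sup>2)"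
  by (simp add: AM_def matrix_vector_mult_add_rdistrib smul_mv inner_add_right wfw_qf diag_qf)

lemma AM_transpose: "transpose (AM psi_id psi_f W a b) = AM psi_id psi_f W a b"
  by (simp add: AM_def transpose_plus transpose_scalar matrix_transpose_mul transpose_diag matrix_mul_assoc)

lemma AM_sym: "x \<bullet> (AM psi_id psi_f W a b *v y) = y \<bullet> (AM psi_id psi_f W a b *v x)"
  by (metis tW AM_transpose inner_commute)

context
  fixes psi_id :: "real ^ 'n" and psi_f :: "real ^ 'k" and W :: "real ^ 'k ^ 'n"
  assumes pos_id: "\<forall>i. psi_id $ i > 0"
    and pos_f: "\<forall>k. psi_f $ k > 0"
begin

lemma sum_id_nonneg: "0 \<le> (\<Sum>i\<in>UNIV. psi_id$i * (x$i)\<^sup>2)"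
  using pos_id by (intro sum_nonneg) (simp add: less_imp_le)

lemma sum_f_nonneg: "0 \<le> (\<Sum>k\<in>UNIV. psi_f$k * (y$k)\<^sup>2)"
  using pos_f by (intro sum_nonneg) (simp add: less_imp_le)

lemma sum_id_pos: "x \<noteq> 0 \<Longrightarrow> 0 < (\<Sum>i\<in>UNIV. psi_id$i * (x$i)\<^sup>2)"
proof -
  assume "x \<noteq> 0"
  then obtain j where j: "x$j \<noteq> 0" by (metis vec_eq_iff zero_index)
  have "0 < psi_id$j * (x$j)\<^sup>2" using j pos_id by simp
  also have "\<dots> \<le> (\<Sum>i\<in>UNIV. psi_id$i * (x$i)\<^sup>2)"
    by (rule member_le_sum) (use pos_id in \<open>auto simp: less_imp_le\<close>)
  finally show ?thesis .
qed

lemma AM_psd: "0 \<le> a \<Longrightarrow> 0 \<le> b \<Longrightarrow> 0 \<le> x \<bullet> (AM psi_id psi_f W a b *v x)"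
  unfolding AM_qf using sum_id_nonneg sum_f_nonneg by simp

lemma AM_inv: assumes "0 < a" "0 \<le> b"
  shows "AM psi_id psi_f W a b *v (matrix_inv (AM psi_id psi_f W a b) *v v) = v"
proof -
  let ?A = "AM psi_id psi_f W a b"
  have "\<forall>x. ?A *v x = 0 \<longrightarrow> x = 0"
  proof (intro allI impI)
    fix x assume h: "?A *v x = 0"
    have "x \<bullet> (?A *v x) = 0" using h by simp
    then have "a * (\<Sum>i\<in>UNIV. psi_id$i * (x$i)\<^sup>2) = 0"
      unfolding AM_qf using sum_id_nonneg[of x] sum_f_nonneg[of "transpose W *v x"] assms
      by (smt (verit) mult_nonneg_nonneg)
    then show "x = 0" using sum_id_pos[of x] assms by fastforce
  qed
  then have "invertible ?A" by (simp add: invertible_left_inverse matrix_left_invertible_ker)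
  then have "?A ** matrix_inv ?A = mat 1"
    unfolding invertible_def matrix_inv_def by (rule someI_ex[THEN conjunct1])
  then show ?thesis by (simp add: matrix_vector_mul_assoc)
qed

lemma Q_var:
  assumes "0 < a" "0 \<le> b"
  shows "2*(v \<bullet> x) - x \<bullet> (AM psi_id psi_f W a b *v x) \<le> v \<bullet> (matrix_inv (AM psi_id psi_f W a b) *v v)"
    and "v \<bullet> (matrix_inv (AM psi_id psi_f W a b) *v v) =
         2*(v \<bullet> (matrix_inv (AM psi_id psi_f W a b) *v v)) - (matrix_inv (AM psi_id psi_f W a b) *v v) \<bullet> (AM psi_id psi_f W a b *v (matrix_inv (AM psi_id psi_f W a b) *v v))"
proof -
  have sym: "\<forall>x y. x \<bullet> (AM psi_id psi_f W a b *v y) = y \<bullet> (AM psi_id psi_f W a b *v x)"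
    using AM_sym by blast
  have psd: "\<forall>z. 0 \<le> z \<bullet> (AM psi_id psi_f W a b *v z)"
    using AM_psd assms by simp
  show "2*(v \<bullet> x) - x \<bullet> (AM psi_id psi_f W a b *v x) \<le> v \<bullet> (matrix_inv (AM psi_id psi_f W a b) *v v)"
    by (rule var(1)[OF sym psd AM_inv[OF assms]])
  show "v \<bullet> (matrix_inv (AM psi_id psi_f W a b) *v v) =
         2*(v \<bullet> (matrix_inv (AM psi_id psi_f W a b) *v v)) - (matrix_inv (AM psi_id psi_f W a b) *v v) \<bullet> (AM psi_id psi_f W a b *v (matrix_inv (AM psi_id psi_f W a b) *v v))"
    by (rule var(2)[OF sym psd AM_inv[OF assms]])
qed


lemma sum_bound:
  fixes p t d :: "real ^ 'm"
  assumes "0 < a" "\<forall>i. 0 < d$i"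
  shows "2*(p \<bullet> t) - a*(\<Sum>i\<in>UNIV. d$i * (t$i)\<^sup>2) \<le> (\<Sum>i\<in>UNIV. (p$i)\<^sup>2 / d$i) / a"
proof -
  have "2*(p \<bullet> t) - a*(\<Sum>i\<in>UNIV. d$i * (t$i)\<^sup>2) = (\<Sum>i\<in>UNIV. 2*(p$i)*(t$i) - (a*d$i)*(t$i)\<^sup>2)"
    by (simp add: inner_vec_def sum_distrib_left sum_subtractf algebra_simps)
  also have "\<dots> \<le> (\<Sum>i\<in>UNIV. (p$i)\<^sup>2/(a*d$i))"
    by (rule sum_mono, rule term_bound) (use assms in simp)
  also have "\<dots> = (\<Sum>i\<in>UNIV. (p$i)\<^sup>2 / d$i) / a"
    by (simp add: sum_divide_distrib mult.commute)
  finally show ?thesis .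
qed

lemma upper_id:
  assumes "0 < a" "0 \<le> b"
  shows "v \<bullet> (matrix_inv (AM psi_id psi_f W a b) *v v) \<le> (\<Sum>i\<in>UNIV. (v$i)\<^sup>2 / psi_id$i) / a"
proof -
  define y where "y = matrix_inv (AM psi_id psi_f W a b) *v v"
  have "v \<bullet> y = 2*(v \<bullet> y) - y \<bullet> (AM psi_id psi_f W a b *v y)"
    using Q_var(2)[OF assms, of v] unfolding y_def .
  also have "\<dots> \<le> 2*(v \<bullet> y) - a*(\<Sum>i\<in>UNIV. psi_id$i * (y$i)\<^sup>2)"
    unfolding AM_qf using sum_f_nonneg[of "transpose W *v y"] assms by simp
  also have "\<dots> \<le> (\<Sum>i\<in>UNIV. (v$i)\<^sup>2 / psi_id$i) / a"
    by (rule sum_bound) (use assms pos_id in auto)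
  finally show ?thesis unfolding y_def .
qed

lemma lower_id:
  assumes "0 < a" "0 \<le> b"
  shows "(2 - a) * (\<Sum>i\<in>UNIV. (v$i)\<^sup>2 / psi_id$i)
     - b * (\<Sum>k\<in>UNIV. psi_f$k * ((transpose W *v (\<chi> i. v$i / psi_id$i))$k)\<^sup>2)
     \<le> v \<bullet> (matrix_inv (AM psi_id psi_f W a b) *v v)"
proof -
  define x where "x = (\<chi> i. v$i / psi_id$i)"
  have e1: "v \<bullet> x = (\<Sum>i\<in>UNIV. (v$i)\<^sup>2 / psi_id$i)"
    by (simp add: x_def inner_vec_def power2_eq_square)
  have e2: "(\<Sum>i\<in>UNIV. psi_id$i * (x$i)\<^sup>2) = (\<Sum>i\<in>UNIV. (v$i)\<^sup>2 / psi_id$i)"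
    by (rule sum.cong) (use pos_id in \<open>auto simp: x_def power2_eq_square field_simps\<close>)
  show ?thesis
    using Q_var(1)[OF assms, of v x] unfolding AM_qf e2 e1 x_def[symmetric]
    by (simp add: algebra_simps)
qed

lemma lower_span:
  assumes "v \<notin> span (columns W)"
  shows "\<exists>\<kappa>>0. \<forall>a b. 0 < a \<longrightarrow> 0 \<le> b \<longrightarrow> \<kappa> / a \<le> v \<bullet> (matrix_inv (AM psi_id psi_f W a b) *v v)"
proof -
  obtain y z where y: "y \<in> span (columns W)" and z: "\<And>w. w \<in> span (columns W) \<Longrightarrow> orthogonal z w"
    and vyz: "v = y + z"
    using orthogonal_subspace_decomp_exists by blast
  have znz: "z \<noteq> 0" using assms y vyz by auto
  have Wz: "transpose W *v z = 0"
  proof -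
    have "column k W \<in> span (columns W)" for k
      by (rule span_base) (auto simp: columns_def)
    then have "z \<bullet> column k W = 0" for k using z orthogonal_def by blast
    then show ?thesis
      by (simp add: vec_eq_iff matrix_vector_mult_def transpose_def column_def inner_vec_def mult.commute)
  qed
  have vz: "v \<bullet> z = z \<bullet> z"
  proof -
    have "z \<bullet> y = 0" using z[OF y] by (simp add: orthogonal_def)
    then have "y \<bullet> z = 0" by (simp add: inner_commute)
    then show ?thesis by (simp add: vyz inner_add_left)
  qed
  have vzpos: "0 < v \<bullet> z" using vz znz by simp
  define pz where "pz = (\<Sum>i\<in>UNIV. psi_id$i * (z$i)\<^sup>2)"
  have pzpos: "0 < pz" unfolding pz_def by (rule sum_id_pos[OF znz])
  define \<kappa> where "\<kappa> = (v \<bullet> z)\<^sup>2 / pz"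
  have kpos: "0 < \<kappa>" using vzpos pzpos by (simp add: \<kappa>_def)
  have "\<forall>a b. 0 < a \<longrightarrow> 0 \<le> b \<longrightarrow> \<kappa> / a \<le> v \<bullet> (matrix_inv (AM psi_id psi_f W a b) *v v)"
  proof (intro allI impI)
    fix a b :: real assume a: "0 < a" and b: "0 \<le> b"
    define s where "s = (v \<bullet> z) / (pz * a)"
    define x where "x = s *\<^sub>R z"
    have Wx: "transpose W *v x = 0" unfolding x_def matrix_vector_mult_scaleR Wz by simp
    have px: "(\<Sum>i\<in>UNIV. psi_id$i * (x$i)\<^sup>2) = s\<^sup>2 * pz"
      by (simp add: x_def pz_def sum_distrib_left power_mult_distrib algebra_simps)
    have "2*(v \<bullet> x) - x \<bullet> (AM psi_id psi_f W a b *v x) = 2 * s * (v \<bullet> z) - a * (s\<^sup>2 * pz)"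
      unfolding AM_qf px Wx by (simp add: x_def)
    also have "\<dots> = \<kappa> / a"
      using a pzpos by (simp add: s_def \<kappa>_def field_simps power2_eq_square)
    finally show "\<kappa> / a \<le> v \<bullet> (matrix_inv (AM psi_id psi_f W a b) *v v)"
      using Q_var(1)[OF a b, of v x] by simp
  qed
  then show ?thesis using kpos by blast
qed

lemma upper_f:
  assumes "0 < a" "0 < b"
  shows "(W *v u) \<bullet> (matrix_inv (AM psi_id psi_f W a b) *v (W *v u)) \<le> (\<Sum>k\<in>UNIV. (u$k)\<^sup>2 / psi_f$k) / b"
proof -
  have ab: "0 \<le> b" using assms by simp
  define y where "y = matrix_inv (AM psi_id psi_f W a b) *v (W *v u)"
  have "(W *v u) \<bullet> y = 2*((W *v u) \<bullet> y) - y \<bullet> (AM psi_id psi_f W a b *v y)"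
    using Q_var(2)[OF assms(1) ab, of "W *v u"] unfolding y_def .
  also have "\<dots> \<le> 2*(u \<bullet> (transpose W *v y)) - b*(\<Sum>k\<in>UNIV. psi_f$k * ((transpose W *v y)$k)\<^sup>2)"
    unfolding AM_qf using sum_id_nonneg[of y] assms
    by (simp add: inner_commute[of "W *v u"] tW inner_commute[of u])
  also have "\<dots> \<le> (\<Sum>k\<in>UNIV. (u$k)\<^sup>2 / psi_f$k) / b"
    by (rule sum_bound) (use assms pos_f in auto)
  finally show ?thesis unfolding y_def .
qed

lemma lower_f:
  assumes "0 < a" "0 \<le> b" and tx: "transpose W *v x = (\<chi> k. u$k / psi_f$k)"
  shows "(2 - b) * (\<Sum>k\<in>UNIV. (u$k)\<^sup>2 / psi_f$k) - a * (\<Sum>i\<in>UNIV. psi_id$i * (x$i)\<^sup>2)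
     \<le> (W *v u) \<bullet> (matrix_inv (AM psi_id psi_f W a b) *v (W *v u))"
proof -
  have e1: "(W *v u) \<bullet> x = (\<Sum>k\<in>UNIV. (u$k)\<^sup>2 / psi_f$k)"
  proof -
    have "(W *v u) \<bullet> x = (transpose W *v x) \<bullet> u" by (metis inner_commute tW)
    then show ?thesis unfolding tx by (simp add: inner_vec_def power2_eq_square mult.commute)
  qed
  have e2: "(\<Sum>k\<in>UNIV. psi_f$k * ((transpose W *v x)$k)\<^sup>2) = (\<Sum>k\<in>UNIV. (u$k)\<^sup>2 / psi_f$k)"
    unfolding tx by (rule sum.cong) (use pos_f in \<open>auto simp: power2_eq_square field_simps\<close>)
  show ?thesis
    using Q_var(1)[OF assms(1,2), of "W *v u" x] unfolding AM_qf e2 e1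
    by (simp add: algebra_simps)
qed

end

theorem proposition2:
  fixes psi_id :: "real ^ 'n" and psi_f :: "real ^ 'k" and W :: "real ^ 'k ^ 'n"
  assumes pos_id: "\<forall>i. psi_id $ i > 0"
    and pos_f: "\<forall>k. psi_f $ k > 0"
    and indep: "lin_indep_columns W"
  shows
    "(\<forall>v. ((\<lambda>(\<alpha>, \<beta>). Cbar psi_id psi_f W \<alpha> \<beta> v) \<longlongrightarrow>
            1/2 * (v \<bullet> (matrix_inv (diag_mat psi_id) *v v)))
          (at (1, 0) within ({0<..1} \<times> {0<..1}))
       \<and> 1/2 * (v \<bullet> (matrix_inv (diag_mat psi_id) *v v)) = 1/2 * (\<Sum>i\<in>UNIV. (v $ i)\<^sup>2 / psi_id $ i))
     \<and> (\<forall>v. v \<notin> span (columns W) \<longrightarrow>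
       filterlim (\<lambda>(\<alpha>, \<beta>). Cbar psi_id psi_f W \<alpha> \<beta> v) at_top
          (at (0, 1) within ({0<..1} \<times> {0<..1})))
     \<and> (\<forall>u. ((\<lambda>(\<alpha>, \<beta>). Cbar psi_id psi_f W \<alpha> \<beta> (W *v u)) \<longlongrightarrow>
            1/2 * (u \<bullet> (matrix_inv (diag_mat psi_f) *v u)))
          (at (0, 1) within ({0<..1} \<times> {0<..1})))"
proof -
  let ?S = "{0<..1::real} \<times> {0<..1::real}"
  let ?Q = "\<lambda>p v. v \<bullet> (matrix_inv (AM psi_id psi_f W (fst p) (snd p)) *v v)"
  have C: "(\<lambda>(\<alpha>, \<beta>). Cbar psi_id psi_f W \<alpha> \<beta> v) = (\<lambda>p. 1/2 * ?Q p v)" for v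
    by (simp add: Cbar_def impactG_def AM_def case_prod_unfold)
  have evS: "eventually (\<lambda>p. p \<in> ?S) (at c within ?S)" for c
    by (simp add: eventually_at_filter)
  have evpos: "eventually (\<lambda>p. 0 < fst p \<and> 0 < snd p) (at c within ?S)" for c
    using evS[of c] by eventually_elim auto
  have fst_lim: "((\<lambda>p. fst p) \<longlongrightarrow> fst c) (at c within ?S)" for c :: "real \<times> real"
    by (intro tendsto_intros)
  have snd_lim: "((\<lambda>p. snd p) \<longlongrightarrow> snd c) (at c within ?S)" for c :: "real \<times> real"
    by (intro tendsto_intros)
  have diag_val: "x \<bullet> (matrix_inv (diag_mat d) *v x) = (\<Sum>i\<in>UNIV. (x$i)\<^sup>2 / d$i)"
    if "\<forall>i. 0 < d$i" for d x :: "real ^ 'a"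
  proof -
    have h: "\<forall>i. d$i \<noteq> 0" using that by (metis less_irrefl)
    show ?thesis unfolding matrix_inv_diag[OF h] diag_mv by (simp add: inner_vec_def power2_eq_square)
  qed
  have P1: "((\<lambda>(\<alpha>, \<beta>). Cbar psi_id psi_f W \<alpha> \<beta> v) \<longlongrightarrow>
            1/2 * (v \<bullet> (matrix_inv (diag_mat psi_id) *v v)))
          (at (1, 0) within ?S)
       \<and> 1/2 * (v \<bullet> (matrix_inv (diag_mat psi_id) *v v)) = 1/2 * (\<Sum>i\<in>UNIV. (v $ i)\<^sup>2 / psi_id $ i)" for v
  proof -
    define c where "c = (\<Sum>i\<in>UNIV. (v $ i)\<^sup>2 / psi_id $ i)"
    define bb where "bb = (\<Sum>k\<in>UNIV. psi_f$k * ((transpose W *v (\<chi> i. v$i / psi_id$i))$k)\<^sup>2)"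
    have f1: "((\<lambda>p. fst p) \<longlongrightarrow> 1) (at (1::real, 0::real) within ?S)" using fst_lim[of "(1,0)"] by simp
    have s0: "((\<lambda>p. snd p) \<longlongrightarrow> 0) (at (1::real, 0::real) within ?S)" using snd_lim[of "(1,0)"] by simp
    have lo: "((\<lambda>p. 1/2 * ((2 - fst p) * c - snd p * bb)) \<longlongrightarrow> 1/2 * c) (at (1, 0) within ?S)"
    proof -
      have "((\<lambda>p. 1/2 * ((2 - fst p) * c - snd p * bb)) \<longlongrightarrow> 1/2 * ((2 - 1) * c - 0 * bb)) (at (1, 0) within ?S)"
        by (intro tendsto_mult tendsto_diff tendsto_const f1 s0)
      moreover have "1/2 * ((2 - 1) * c - 0 * bb) = 1/2 * (c::real)" by simp
      ultimately show ?thesis by simp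
    qed
    have up: "((\<lambda>p. 1/2 * (c / fst p)) \<longlongrightarrow> 1/2 * c) (at (1, 0) within ?S)"
      using tendsto_mult[OF tendsto_const tendsto_divide[OF tendsto_const f1], of "1/2" c] by simp
    have "((\<lambda>p. 1/2 * ?Q p v) \<longlongrightarrow> 1/2 * c) (at (1, 0) within ?S)"
    proof (rule tendsto_sandwich[OF _ _ lo up])
      show "eventually (\<lambda>p. 1/2 * ((2 - fst p) * c - snd p * bb) \<le> 1/2 * ?Q p v) (at (1, 0) within ?S)"
        using evpos[of "(1,0)"]
      proof eventually_elim
        case (elim p)
        have "(2 - fst p) * c - snd p * bb \<le> ?Q p v"
          unfolding c_def bb_def by (rule lower_id[OF pos_id pos_f]) (use elim in auto)
        then show ?case by simp
      qed
      show "eventually (\<lambda>p. 1/2 * ?Q p v \<le> 1/2 * (c / fst p)) (at (1, 0) within ?S)"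
        using evpos by eventually_elim (use upper_id[OF pos_id pos_f] in \<open>auto simp: c_def\<close>)
    qed
    moreover have "v \<bullet> (matrix_inv (diag_mat psi_id) *v v) = c"
      unfolding c_def by (rule diag_val[OF pos_id])
    ultimately show ?thesis unfolding C by (simp add: c_def)
  qed
  have P2: "filterlim (\<lambda>(\<alpha>, \<beta>). Cbar psi_id psi_f W \<alpha> \<beta> v) at_top (at (0, 1) within ?S)"
    if nv: "v \<notin> span (columns W)" for v
  proof -
    obtain \<kappa> where kpos: "0 < \<kappa>"
      and kb: "\<forall>a b. 0 < a \<longrightarrow> 0 \<le> b \<longrightarrow> \<kappa> / a \<le> v \<bullet> (matrix_inv (AM psi_id psi_f W a b) *v v)"
      using lower_span[OF pos_id pos_f nv] by blast
    have "filterlim (\<lambda>p. fst p) (at_right 0) (at (0::real, 1::real) within ?S)"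
    proof -
      have "eventually (\<lambda>p. fst p \<in> {0<..} \<and> fst p \<noteq> 0) (at (0::real, 1::real) within ?S)"
        using evpos[of "(0,1)"] by eventually_elim auto
      then show ?thesis unfolding filterlim_at using fst_lim[of "(0,1)"] by simp
    qed
    then have invlim: "filterlim (\<lambda>p. inverse (fst p)) at_top (at (0::real, 1::real) within ?S)"
      by (rule filterlim_compose[OF filterlim_inverse_at_top_right])
    have lim: "filterlim (\<lambda>p. \<kappa>/2 * inverse (fst p)) at_top (at (0::real, 1::real) within ?S)"
      by (rule filterlim_tendsto_pos_mult_at_top[OF tendsto_const _ invlim]) (use kpos in simp)
    have "eventually (\<lambda>p. \<kappa>/2 * inverse (fst p) \<le> 1/2 * ?Q p v) (at (0::real, 1::real) within ?S)"
      using evpos[of "(0,1)"]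
    proof eventually_elim
      case (elim p)
      then have "\<kappa> / fst p \<le> ?Q p v" using kb[rule_format, of "fst p" "snd p"] by simp
      moreover have eq2: "\<kappa>/2 * inverse (fst p) = 1/2 * (\<kappa> / fst p)" by (simp add: inverse_eq_divide)
      ultimately show ?case unfolding eq2 by (intro mult_left_mono) simp_all
    qed
    then show ?thesis unfolding C by (rule filterlim_at_top_mono[OF lim])
  qed
  have P3: "((\<lambda>(\<alpha>, \<beta>). Cbar psi_id psi_f W \<alpha> \<beta> (W *v u)) \<longlongrightarrow>
            1/2 * (u \<bullet> (matrix_inv (diag_mat psi_f) *v u)))
          (at (0, 1) within ?S)" for u
  proof -
    obtain B where B: "B ** W = mat 1"
      using indep matrix_left_invertible_ker[of W] unfolding lin_indep_columns_def by blast
    define x where "x = transpose B *v (\<chi> k. u$k / psi_f$k)"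
    have tx: "transpose W *v x = (\<chi> k. u$k / psi_f$k)"
    proof -
      have "transpose W ** transpose B = mat 1"
      proof -
        have "transpose (B ** W) = mat 1" using B by simp
        then show ?thesis by (simp only: matrix_transpose_mul)
      qed
      then show ?thesis unfolding x_def matrix_vector_mul_assoc by (simp only: matrix_vector_mul_lid)
    qed
    define c where "c = (\<Sum>k\<in>UNIV. (u $ k)\<^sup>2 / psi_f $ k)"
    define e where "e = (\<Sum>i\<in>UNIV. psi_id$i * (x$i)\<^sup>2)"
    have f0: "((\<lambda>p. fst p) \<longlongrightarrow> 0) (at (0::real, 1::real) within ?S)" using fst_lim[of "(0,1)"] by simp
    have s1: "((\<lambda>p. snd p) \<longlongrightarrow> 1) (at (0::real, 1::real) within ?S)" using snd_lim[of "(0,1)"] by simp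
    have lo: "((\<lambda>p. 1/2 * ((2 - snd p) * c - fst p * e)) \<longlongrightarrow> 1/2 * c) (at (0, 1) within ?S)"
    proof -
      have "((\<lambda>p. 1/2 * ((2 - snd p) * c - fst p * e)) \<longlongrightarrow> 1/2 * ((2 - 1) * c - 0 * e)) (at (0, 1) within ?S)"
        by (intro tendsto_mult tendsto_diff tendsto_const f0 s1)
      moreover have "1/2 * ((2 - 1) * c - 0 * e) = 1/2 * (c::real)" by simp
      ultimately show ?thesis by simp
    qed
    have up: "((\<lambda>p. 1/2 * (c / snd p)) \<longlongrightarrow> 1/2 * c) (at (0, 1) within ?S)"
      using tendsto_mult[OF tendsto_const tendsto_divide[OF tendsto_const s1], of "1/2" c] by simp
    have "((\<lambda>p. 1/2 * ?Q p (W *v u)) \<longlongrightarrow> 1/2 * c) (at (0, 1) within ?S)"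
    proof (rule tendsto_sandwich[OF _ _ lo up])
      show "eventually (\<lambda>p. 1/2 * ((2 - snd p) * c - fst p * e) \<le> 1/2 * ?Q p (W *v u)) (at (0, 1) within ?S)"
        using evpos[of "(0,1)"]
      proof eventually_elim
        case (elim p)
        have "(2 - snd p) * c - fst p * e \<le> ?Q p (W *v u)"
          unfolding c_def e_def by (rule lower_f[OF pos_id pos_f _ _ tx]) (use elim in auto)
        then show ?case by simp
      qed
      show "eventually (\<lambda>p. 1/2 * ?Q p (W *v u) \<le> 1/2 * (c / snd p)) (at (0, 1) within ?S)"
        using evpos by eventually_elim (use upper_f[OF pos_id pos_f] in \<open>auto simp: c_def\<close>)
    qed
    moreover have "u \<bullet> (matrix_inv (diag_mat psi_f) *v u) = c"
      unfolding c_def by (rule diag_val[OF pos_f])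
    ultimately show ?thesis unfolding C by simp
  qed
  show ?thesis
    apply (intro conjI allI impI)
       apply (rule P1[THEN conjunct1])
      apply (rule P1[THEN conjunct2])
     apply (erule P2)
    apply (rule P3)
    done
qed

end
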